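(* Let $G$ be a finite, simple, connected graph of order $n$. If $G$ contains a cycle, then $\beta(G)\leq n-g(G)+2$, where $g(G)$ is the girth of $G$ and $\beta(G)$ is the metric dimension of $G$.
   Context: For vertices $x,y$ of a connected graph $G$, $d(x,y)$ denotes the length of a shortest $x$–$y$ path. A set $W\subseteq V(G)$ is a resolving set for $G$ if for every two distinct vertices $u,v\in V(G)$ there exists $w\in W$ with $d(u,w)\neq d(v,w)$. The metric dimension $\beta(G)$ is the minimum cardinality of a resolving set for $G$. If $G$ has a cycle, the girth $g(G)$ is the length of a shortest cycle in $G$. *)

theory Defs
  imports Main
begin

definition simple_graph :: "'a set \<Rightarrow> ('a \<Rightarrow> 'a \<Rightarrow> bool) \<Rightarrow> bool" where
  "simple_graph V E \<longleftrightarrow> finite V \<and> (\<forall>x y. E x y \<longrightarrow> x \<in> V \<and> y \<in> V)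
     \<and> (\<forall>x y. E x y \<longrightarrow> E y x) \<and> (\<forall>x. \<not> E x x)"

text \<open>A walk, given as the list of its vertices; its length is the number of edges.\<close>

definition is_walk :: "'a set \<Rightarrow> ('a \<Rightarrow> 'a \<Rightarrow> bool) \<Rightarrow> 'a list \<Rightarrow> bool" where
  "is_walk V E p \<longleftrightarrow> p \<noteq> [] \<and> set p \<subseteq> V \<and> (\<forall>i. Suc i < length p \<longrightarrow> E (p ! i) (p ! Suc i))"

definition connected_graph :: "'a set \<Rightarrow> ('a \<Rightarrow> 'a \<Rightarrow> bool) \<Rightarrow> bool" where
  "connected_graph V E \<longleftrightarrow> V \<noteq> {} \<and>
     (\<forall>x\<in>V. \<forall>y\<in>V. \<exists>p. is_walk V E p \<and> hd p = x \<and> last p = y)"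

definition dist :: "'a set \<Rightarrow> ('a \<Rightarrow> 'a \<Rightarrow> bool) \<Rightarrow> 'a \<Rightarrow> 'a \<Rightarrow> nat" where
  "dist V E x y = (LEAST k. \<exists>p. is_walk V E p \<and> hd p = x \<and> last p = y \<and> length p = Suc k)"

definition resolving_set :: "'a set \<Rightarrow> ('a \<Rightarrow> 'a \<Rightarrow> bool) \<Rightarrow> 'a set \<Rightarrow> bool" where
  "resolving_set V E W \<longleftrightarrow> W \<subseteq> V \<and>
     (\<forall>u\<in>V. \<forall>v\<in>V. u \<noteq> v \<longrightarrow> (\<exists>w\<in>W. dist V E u w \<noteq> dist V E v w))"

definition metric_dimension :: "'a set \<Rightarrow> ('a \<Rightarrow> 'a \<Rightarrow> bool) \<Rightarrow> nat" where
  "metric_dimension V E = (LEAST k. \<exists>W. resolving_set V E W \<and> card W = k)"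

definition is_cycle :: "'a set \<Rightarrow> ('a \<Rightarrow> 'a \<Rightarrow> bool) \<Rightarrow> 'a list \<Rightarrow> bool" where
  "is_cycle V E c \<longleftrightarrow> length c \<ge> 3 \<and> distinct c \<and> set c \<subseteq> V \<and>
     (\<forall>i < length c. E (c ! i) (c ! ((Suc i) mod length c)))"

definition has_cycle :: "'a set \<Rightarrow> ('a \<Rightarrow> 'a \<Rightarrow> bool) \<Rightarrow> bool" where
  "has_cycle V E \<longleftrightarrow> (\<exists>c. is_cycle V E c)"

definition girth :: "'a set \<Rightarrow> ('a \<Rightarrow> 'a \<Rightarrow> bool) \<Rightarrow> nat" where
  "girth V E = (LEAST k. \<exists>c. is_cycle V E c \<and> length c = k)"

end

theory Submission
  imports Defs
begin

lemma len3_ne: "3 \<le> length c \<Longrightarrow> c \<noteq> []"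
  by (cases c) auto

fun wk :: "'a set \<Rightarrow> ('a \<Rightarrow> 'a \<Rightarrow> bool) \<Rightarrow> 'a list \<Rightarrow> bool" where
  "wk V E [] = False"
| "wk V E [x] = (x \<in> V)"
| "wk V E (x # y # zs) = (x \<in> V \<and> E x y \<and> wk V E (y # zs))"

lemma is_walk_wk: "is_walk V E p = wk V E p"
proof (induction V E p rule: wk.induct)
  case 1 then show ?case by (simp add: is_walk_def)
next
  case (2 V E x) then show ?case by (simp add: is_walk_def)
next
  case (3 V E x y zs)
  have "is_walk V E (x#y#zs) = (x \<in> V \<and> E x y \<and> is_walk V E (y#zs))"
  proof
    assume H: "is_walk V E (x#y#zs)"
    have all: "\<forall>i. Suc i < Suc (Suc (length zs)) \<longrightarrow> E ((x#y#zs)!i) ((x#y#zs)!Suc i)"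
      using H by (simp add: is_walk_def)
    have "E x y" using all[rule_format, of 0] by simp
    moreover have "is_walk V E (y#zs)" unfolding is_walk_def
    proof (intro conjI allI impI)
      fix i assume "Suc i < length (y#zs)"
      then show "E ((y#zs)!i) ((y#zs)!Suc i)" using all[rule_format, of "Suc i"] by simp
    qed (use H in \<open>auto simp: is_walk_def\<close>)
    ultimately show "x \<in> V \<and> E x y \<and> is_walk V E (y#zs)" using H unfolding is_walk_def by auto
  next
    assume H: "x \<in> V \<and> E x y \<and> is_walk V E (y#zs)"
    show "is_walk V E (x#y#zs)" unfolding is_walk_def
    proof (intro conjI allI impI)
      fix i assume "Suc i < length (x#y#zs)"
      then show "E ((x#y#zs) ! i) ((x#y#zs) ! Suc i)" using H unfolding is_walk_def
        by (cases i) auto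
    qed (use H in \<open>auto simp: is_walk_def\<close>)
  qed
  then show ?case using 3 by simp
qed

lemma wk_append: "xs \<noteq> [] \<Longrightarrow> ys \<noteq> [] \<Longrightarrow>
   wk V E (xs @ ys) = (wk V E xs \<and> wk V E ys \<and> E (last xs) (hd ys))"
proof (induction xs)
  case Nil then show ?case by simp
next
  case (Cons a xs)
  show ?case
  proof (cases xs)
    case Nil
    then show ?thesis using Cons.prems by (cases ys) auto
  next
    case (Cons b xs')
    then show ?thesis using Cons.IH Cons.prems by auto
  qed
qed

lemma wk_prefix: "wk V E (xs @ ys) \<Longrightarrow> xs \<noteq> [] \<Longrightarrow> wk V E xs"
  by (cases "ys = []") (auto simp: wk_append)

lemma wk_suffix: "wk V E (xs @ ys) \<Longrightarrow> ys \<noteq> [] \<Longrightarrow> wk V E ys"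
  by (cases "xs = []") (auto simp: wk_append)

lemma wk_glue: "wk V E (xs @ [y]) \<Longrightarrow> wk V E (y # ys) \<Longrightarrow> wk V E (xs @ y # ys)"
proof (cases "xs = []")
  case True then show "wk V E (y # ys) \<Longrightarrow> ?thesis" by simp
next
  case False
  assume a: "wk V E (xs @ [y])" "wk V E (y # ys)"
  then have "wk V E xs \<and> E (last xs) y" using False wk_append[where xs=xs and ys="[y]"] by auto
  then show ?thesis using a False wk_append[where xs=xs and ys="y#ys"] by auto
qed

lemma wk_rev: assumes sym: "\<forall>x y. E x y \<longrightarrow> E y x" shows "wk V E xs \<Longrightarrow> wk V E (rev xs)"
proof (induction xs)
  case Nil then show ?case by simp
next
  case (Cons a xs)
  show ?case
  proof (cases xs)
    case Nil then show ?thesis using Cons by simp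
  next
    case (Cons b xs')
    have w: "wk V E xs" "a \<in> V" "E a b" using Cons.prems Cons by auto
    have "wk V E (rev xs @ [a])"
      using wk_append[where xs="rev xs" and ys="[a]"] Cons.IH w sym Cons by (auto simp: last_rev)
    then show ?thesis by simp
  qed
qed

lemma wk_set: "wk V E xs \<Longrightarrow> set xs \<subseteq> V"
  by (induction V E xs rule: wk.induct) auto

lemma cycle_of_closed:
  assumes w: "wk V E (c @ [hd c])" and d: "distinct c" and l: "3 \<le> length c"
  shows "is_cycle V E c"
proof -
  have iw: "is_walk V E (c @ [hd c])" using w by (simp add: is_walk_wk)
  have "\<forall>i < length c. E (c ! i) (c ! ((Suc i) mod length c))"
  proof (intro allI impI)
    fix i assume i: "i < length c"
    have e: "E ((c @ [hd c]) ! i) ((c @ [hd c]) ! Suc i)" using iw i unfolding is_walk_def by auto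
    show "E (c ! i) (c ! ((Suc i) mod length c))"
    proof (cases "Suc i < length c")
      case True then show ?thesis using e i by (simp add: nth_append)
    next
      case False
      then have "Suc i = length c" using i by simp
      moreover have "hd c = c ! 0" using len3_ne[OF l] by (simp add: hd_conv_nth)
      ultimately show ?thesis using e i l by (simp add: nth_append)
    qed
  qed
  moreover have "set c \<subseteq> V" using wk_set[OF w] by auto
  ultimately show ?thesis using d l unfolding is_cycle_def by auto
qed

lemma closed_of_cycle:
  assumes "is_cycle V E c" shows "wk V E (c @ [c ! 0])"
proof -
  have l: "3 \<le> length c" and s: "set c \<subseteq> V"
    and e: "\<forall>i < length c. E (c ! i) (c ! ((Suc i) mod length c))"
    using assms unfolding is_cycle_def by auto
  have "is_walk V E (c @ [c ! 0])" unfolding is_walk_def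
  proof (intro conjI allI impI)
    show "set (c @ [c ! 0]) \<subseteq> V" using s len3_ne[OF l] nth_mem[of 0 c] by auto
  next
    fix i assume i: "Suc i < length (c @ [c ! 0])"
    then have i': "i < length c" by simp
    show "E ((c @ [c ! 0]) ! i) ((c @ [c ! 0]) ! Suc i)"
    proof (cases "Suc i < length c")
      case True
      then have "Suc i mod length c = Suc i" by simp
      moreover have "E (c!i) (c!(Suc i mod length c))" using e i' by blast
      ultimately show ?thesis using i' True by (auto simp: nth_append)
    next
      case False
      then have si: "Suc i = length c" using i' by simp
      have "E (c!i) (c!(Suc i mod length c))" using e i' by blast
      then show ?thesis using si i' by (auto simp: nth_append)
    qed
  qed simp
  then show ?thesis by (simp add: is_walk_wk)
qed

lemma two_paths_cycle:
  assumes sym: "\<forall>x y. E x y \<longrightarrow> E y x"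
  shows "wk V E p \<Longrightarrow> wk V E q \<Longrightarrow> distinct p \<Longrightarrow> distinct q \<Longrightarrow> hd p = hd q
    \<Longrightarrow> last p = last q \<Longrightarrow> p \<noteq> q
    \<Longrightarrow> \<exists>c. is_cycle V E c \<and> length c + 2 \<le> length p + length q"
proof (induction p arbitrary: q)
  case Nil then show ?case by simp
next
  case (Cons x p')
  obtain q' where q: "q = x # q'" using Cons.prems by (cases q) auto
  have p'ne: "p' \<noteq> []"
  proof
    assume "p' = []"
    then have "last q = x" using Cons.prems by simp
    then have "q' = []" using Cons.prems(4) q
      by (metis distinct.simps(2) last.simps last_in_set)
    then show False using Cons.prems(7) q \<open>p' = []\<close> by simp
  qed
  have q'ne: "q' \<noteq> []"
  proof
    assume "q' = []"
    then have "last (x#p') = x" using Cons.prems q by simp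
    then have "p' = []" using Cons.prems(3)
      by (metis distinct.simps(2) last.simps last_in_set)
    then show False using p'ne by simp
  qed
  have wp': "wk V E p'" using Cons.prems(1) p'ne by (cases p') auto
  have wq': "wk V E q'" using Cons.prems(2) q q'ne by (cases q') auto
  have lasteq: "last p' = last q'" using Cons.prems(6) q p'ne q'ne by simp
  show ?case
  proof (cases "hd p' = hd q'")
    case True
    have "p' \<noteq> q'" using Cons.prems(7) q by simp
    then obtain c where "is_cycle V E c" "length c + 2 \<le> length p' + length q'"
      using Cons.IH[OF wp' wq'] Cons.prems(3,4) q True lasteq by auto
    then show ?thesis using q by auto
  next
    case False
    define P where "P = (\<lambda>v. v \<notin> set p')"
    define A where "A = takeWhile P q'"
    define R where "R = dropWhile P q'"
    have q'eq: "q' = A @ R" unfolding A_def R_def by simp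
    have "last q' \<in> set p'" using lasteq p'ne by (metis last_in_set)
    then have Rne: "R \<noteq> []" unfolding R_def P_def using q'ne
      by (metis dropWhile_eq_Nil_conv last_in_set)
    then obtain y R' where R: "R = y # R'" by (cases R) auto
    have "y \<in> set p'" using R unfolding R_def P_def
      by (metis hd_dropWhile list.sel(1) list.simps(3))
    then obtain B C where p'eq: "p' = B @ y # C" by (meson split_list)
    have Aset: "\<forall>a\<in>set A. a \<notin> set p'" unfolding A_def P_def by (auto dest: set_takeWhileD)
    define c where "c = x # B @ y # rev A"
    have w1: "wk V E (x # B @ [y])"
      using wk_prefix[where xs="x # B @ [y]" and ys=C] Cons.prems(1) p'eq by simp
    have w2': "wk V E (x # A @ [y])"
      using wk_prefix[where xs="x # A @ [y]" and ys="R'"] Cons.prems(2) q q'eq R by simp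
    have w2: "wk V E (y # rev A @ [x])"
      using wk_rev[OF sym w2'] by simp
    have wc: "wk V E (c @ [hd c])"
      using wk_glue[where xs="x # B" and y=y and ys="rev A @ [x]"] w1 w2 unfolding c_def by simp
    have dp: "distinct (x # B @ y # C)" using Cons.prems(3) p'eq by simp
    have dq: "distinct (x # A @ y # R')" using Cons.prems(4) q q'eq R by simp
    have dc: "distinct c" unfolding c_def using dp dq Aset p'eq by auto
    have lc: "3 \<le> length c"
    proof (rule ccontr)
      assume "\<not> 3 \<le> length c"
      then have "B = [] \<and> A = []" unfolding c_def by (cases B; cases A) auto
      then show False using False p'eq q'eq R by simp
    qed
    have cyc: "is_cycle V E c" by (rule cycle_of_closed[OF wc dc lc])
    have "length c + 2 \<le> length (x # p') + length q"
      unfolding c_def using p'eq q q'eq R by simp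
    then show ?thesis using cyc by blast
  qed
qed

lemma dist_le:
  assumes "wk V E p" "hd p = x" "last p = y"
  shows "dist V E x y + 1 \<le> length p"
proof -
  have ne: "p \<noteq> []" using assms(1) by auto
  have "dist V E x y \<le> length p - 1" unfolding dist_def
    by (rule Least_le) (use assms ne in \<open>auto simp: is_walk_wk\<close>)
  then show ?thesis using ne by (cases p) auto
qed

lemma dist_ex:
  assumes con: "connected_graph V E" and x: "x \<in> V" and y: "y \<in> V"
  shows "\<exists>p. wk V E p \<and> hd p = x \<and> last p = y \<and> length p = Suc (dist V E x y) \<and> distinct p"
proof -
  obtain p0 where p0: "is_walk V E p0" "hd p0 = x" "last p0 = y"
    using con x y unfolding connected_graph_def by blast
  have "\<exists>k p. is_walk V E p \<and> hd p = x \<and> last p = y \<and> length p = Suc k"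
    using p0 by (intro exI[of _ "length p0 - 1"] exI[of _ p0]) (auto simp: is_walk_def)
  then have "\<exists>p. is_walk V E p \<and> hd p = x \<and> last p = y \<and> length p = Suc (dist V E x y)"
    unfolding dist_def by (rule LeastI_ex)
  then obtain p where p: "wk V E p" "hd p = x" "last p = y" "length p = Suc (dist V E x y)"
    by (auto simp: is_walk_wk)
  have "distinct p"
  proof (rule ccontr)
    assume "\<not> distinct p"
    then obtain as z bs cs where pe: "p = as @ [z] @ bs @ [z] @ cs"
      using not_distinct_decomp by blast
    define p2 where "p2 = as @ z # cs"
    have wa: "wk V E (as @ [z])" using wk_prefix[where xs="as @ [z]" and ys="bs @ [z] @ cs"] p(1) pe by simp
    have wc: "wk V E (z # cs)" using wk_suffix[where xs="as @ [z] @ bs" and ys="z # cs"] p(1) pe by simp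
    have w2: "wk V E p2" unfolding p2_def by (rule wk_glue[OF wa wc])
    have "hd p2 = x" using p(2) pe unfolding p2_def by (cases as) auto
    moreover have "last p2 = y" using p(3) pe unfolding p2_def by (cases cs rule: rev_cases) auto
    ultimately have "dist V E x y + 1 \<le> length p2" by (rule dist_le[OF w2])
    then show False using p(4) pe unfolding p2_def by simp
  qed
  then show ?thesis using p by blast
qed

lemma dist_self: "x \<in> V \<Longrightarrow> dist V E x x = 0"
  using dist_le[of V E "[x]" x x] by simp

lemma dist_zero:
  assumes con: "connected_graph V E" and x: "x \<in> V" and y: "y \<in> V" and d: "dist V E x y = 0"
  shows "x = y"
proof -
  obtain p where "wk V E p" "hd p = x" "last p = y" "length p = Suc 0"
    using dist_ex[OF con x y] d by auto
  then show ?thesis by (cases p) auto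
qed

lemma girth_le: "is_cycle V E c \<Longrightarrow> girth V E \<le> length c"
  unfolding girth_def by (rule Least_le) blast

lemma cycle_dist:
  assumes sg: "simple_graph V E" and con: "connected_graph V E"
   and cyc: "is_cycle V E c" and len: "length c = girth V E" and i: "i < length c"
  shows "dist V E (c!0) (c!i) = min i (length c - i)"
proof -
  define g where "g = length c"
  have sym: "\<forall>x y. E x y \<longrightarrow> E y x" using sg unfolding simple_graph_def by auto
  have g3: "3 \<le> g" and dc: "distinct c" and sc: "set c \<subseteq> V"
    using cyc unfolding is_cycle_def g_def by auto
  have cw: "wk V E (c @ [c!0])" by (rule closed_of_cycle[OF cyc])
  have ig: "i < g" using i g_def by simp
  define T where "T = take (Suc i) c"
  have cwT: "c @ [c!0] = T @ (drop (Suc i) c @ [c!0])" unfolding T_def by simp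
  have wT: "wk V E T" by (rule wk_prefix[OF cw[unfolded cwT]]) (simp add: T_def len3_ne[OF g3[unfolded g_def]])
  have hT: "hd T = c!0" unfolding T_def using ig g_def by (cases c) auto
  have lT: "last T = c!i" unfolding T_def using ig g_def by (simp add: take_Suc_conv_app_nth)
  have lenT: "length T = Suc i" unfolding T_def using ig g_def by simp
  have dT: "distinct T" unfolding T_def using dc by simp
  define D where "D = drop i c @ [c!0]"
  have cwD: "c @ [c!0] = take i c @ D" unfolding D_def by simp
  have wD: "wk V E D" using wk_suffix[where xs="take i c" and ys=D] cw cwD unfolding D_def by simp
  have wRD: "wk V E (rev D)" by (rule wk_rev[OF sym wD])
  have hRD: "hd (rev D) = c!0" unfolding D_def by simp
  have lRD: "last (rev D) = c!i" unfolding D_def using ig g_def by (simp add: last_rev hd_drop_conv_nth)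
  have lenRD: "length (rev D) = Suc (g - i)" unfolding D_def g_def by simp
  have up1: "dist V E (c!0) (c!i) \<le> i" using dist_le[OF wT hT lT] lenT by simp
  have up2: "dist V E (c!0) (c!i) \<le> g - i" using dist_le[OF wRD hRD lRD] lenRD by simp
  have lp: "0 < length c" using ig g_def by (cases c) auto
  have c0: "c!0 \<in> V" "c!i \<in> V" using sc nth_mem[OF lp] nth_mem[of i c] ig g_def by auto
  obtain P where P: "wk V E P" "hd P = c!0" "last P = c!i"
      "length P = Suc (dist V E (c!0) (c!i))" "distinct P"
    using dist_ex[OF con c0] by blast
  have "\<not> dist V E (c!0) (c!i) < min i (g - i)"
  proof
    assume lt: "dist V E (c!0) (c!i) < min i (g - i)"
    show False
    proof (cases "i \<le> g - i")
      case True
      have "P \<noteq> T" using P(4) lenT lt by auto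
      then obtain c' where c': "is_cycle V E c'" "length c' + 2 \<le> length P + length T"
        using two_paths_cycle[OF sym P(1) wT P(5) dT] P hT lT by auto
      have "girth V E \<le> length c'" by (rule girth_le[OF c'(1)])
      then show False using c'(2) P(4) lenT lt True len g_def by simp
    next
      case False
      have i0: "0 < i" using False by simp
      have "c!0 \<in> set (take i c)" using i0 ig g_def by (simp add: in_set_conv_nth) (metis i0 nth_take)
      moreover have "set (take i c) \<inter> set (drop i c) = {}"
        using dc by (metis append_take_drop_id distinct_append)
      ultimately have "c!0 \<notin> set (drop i c)" by blast
      then have dD: "distinct (rev D)" unfolding D_def using dc by simp
      have "P \<noteq> rev D" using P(4) lenRD lt by auto
      then obtain c' where c': "is_cycle V E c'" "length c' + 2 \<le> length P + length (rev D)"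
        using two_paths_cycle[OF sym P(1) wRD P(5) dD] P hRD lRD by auto
      have "girth V E \<le> length c'" by (rule girth_le[OF c'(1)])
      then show False using c'(2) P(4) lenRD lt False len g_def by simp
    qed
  qed
  then show ?thesis using up1 up2 g_def unfolding min_def by auto
qed

lemma rotate_cycle:
  assumes cyc: "is_cycle V E c" shows "is_cycle V E (rotate k c)"
proof -
  let ?g = "length c"
  have l: "3 \<le> ?g" and e: "\<forall>i < ?g. E (c ! i) (c ! ((Suc i) mod ?g))"
    using cyc unfolding is_cycle_def by auto
  have "\<forall>n < ?g. E (rotate k c ! n) (rotate k c ! ((Suc n) mod ?g))"
  proof (intro allI impI)
    fix n assume n: "n < ?g"
    have cne: "c \<noteq> []" using len3_ne[OF l] .
    have gp: "0 < ?g" using cne by simp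
    have a: "rotate k c ! n = c ! ((k + n) mod ?g)" using n by (simp add: nth_rotate)
    have b: "rotate k c ! ((Suc n) mod ?g) = c ! ((k + Suc n) mod ?g)"
      using gp cne by (simp add: nth_rotate mod_add_right_eq)
    have "E (c ! ((k + n) mod ?g)) (c ! (Suc ((k + n) mod ?g) mod ?g))"
      using e gp by simp
    moreover have "Suc ((k + n) mod ?g) mod ?g = (k + Suc n) mod ?g"
      by (simp add: mod_Suc_eq)
    ultimately show "E (rotate k c ! n) (rotate k c ! ((Suc n) mod ?g))" using a b by simp
  qed
  then show ?thesis using cyc unfolding is_cycle_def by simp
qed

lemma arith_fact:
  fixes i j g :: nat
  assumes "1 \<le> i" "i \<le> g - 2" "1 \<le> j" "j \<le> g - 2" "i \<noteq> j" "3 \<le> g"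
    "min i (g - i) = min j (g - j)" "min (Suc i) (g - Suc i) = min (Suc j) (g - Suc j)"
  shows False
  using assms unfolding min_def by (auto split: if_splits)

theorem theorem2p1:
  fixes V :: "'a set" and E :: "'a \<Rightarrow> 'a \<Rightarrow> bool"
  assumes "simple_graph V E" and "connected_graph V E" and "has_cycle V E"
  shows "int (metric_dimension V E) \<le> int (card V) - int (girth V E) + 2"
proof -
  note sg = assms(1) and con = assms(2)
  have fin: "finite V" using sg unfolding simple_graph_def by auto
  have "\<exists>c. is_cycle V E c \<and> length c = girth V E"
  proof -
    have "\<exists>k c. is_cycle V E c \<and> length c = k" using assms(3) unfolding has_cycle_def by blast
    then show ?thesis unfolding girth_def by (rule LeastI_ex)
  qed
  then obtain c where cyc: "is_cycle V E c" and len: "length c = girth V E" by blast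
  define g where "g = length c"
  have g3: "3 \<le> g" and dc: "distinct c" and sc: "set c \<subseteq> V"
    using cyc unfolding is_cycle_def g_def by auto
  have cV0: "\<And>k. k < g \<Longrightarrow> c ! k \<in> V" using sc g_def by (metis nth_mem subsetD)
  define X where "X = (\<lambda>i. c ! i) ` {1..g-2}"
  have XV: "X \<subseteq> V" unfolding X_def using cV0 g3 by auto
  have injX: "inj_on (\<lambda>i. c ! i) {1..g-2}"
    unfolding inj_on_def using dc g3 g_def by (auto simp: nth_eq_iff_index_eq)
  have cardX: "card X = g - 2" unfolding X_def using card_image[OF injX] by simp
  define W where "W = V - X"
  have finX: "finite X" using XV fin finite_subset by blast
  have cardW: "card W = card V - (g - 2)" unfolding W_def using card_Diff_subset[OF finX XV] cardX by simp
  have gV: "g - 2 \<le> card V" using card_mono[OF fin XV] cardX by simp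
  have notX: "\<And>k. k < g \<Longrightarrow> c ! k \<in> X \<Longrightarrow> 1 \<le> k \<and> k \<le> g - 2"
  proof -
    fix k assume k: "k < g" "c ! k \<in> X"
    then obtain j where j: "j \<in> {1..g-2}" "c ! k = c ! j" unfolding X_def by auto
    then have "k = j" using dc k g_def g3 by (auto simp: nth_eq_iff_index_eq)
    then show "1 \<le> k \<and> k \<le> g - 2" using j by auto
  qed
  define rc where "rc = rotate (g - 1) c"
  have rcyc: "is_cycle V E rc" unfolding rc_def by (rule rotate_cycle[OF cyc])
  have rlen: "length rc = girth V E" unfolding rc_def using len by simp
  have rc0: "rc ! 0 = c ! (g - 1)" unfolding rc_def using g3 g_def nth_rotate[of 0 c "g - 1"] len3_ne[OF g3[unfolded g_def]] by simp
  have rci: "\<And>i. i \<le> g - 2 \<Longrightarrow> rc ! (Suc i) = c ! i"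
  proof -
    fix i assume i: "i \<le> g - 2"
    have "rc ! (Suc i) = c ! ((g - 1 + Suc i) mod g)" unfolding rc_def using i g3 g_def by (simp add: nth_rotate)
    moreover have "(g - 1 + Suc i) mod g = i"
    proof -
      have "g - 1 + Suc i = i + g" using g3 by simp
      then show ?thesis using i g3 by simp
    qed
    ultimately show "rc ! (Suc i) = c ! i" by simp
  qed
  have d0: "\<And>i. i < g \<Longrightarrow> dist V E (c!0) (c!i) = min i (g - i)"
    using cycle_dist[OF sg con cyc len] g_def by simp
  have d1: "\<And>i. i \<le> g - 2 \<Longrightarrow> dist V E (c!(g-1)) (c!i) = min (Suc i) (g - Suc i)"
  proof -
    fix i assume i: "i \<le> g - 2"
    have "dist V E (rc!0) (rc!(Suc i)) = min (Suc i) (length rc - Suc i)"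
      using cycle_dist[OF sg con rcyc rlen] i g3 g_def rc_def by simp
    then show "dist V E (c!(g-1)) (c!i) = min (Suc i) (g - Suc i)"
      using rc0 rci[OF i] rc_def g_def by simp
  qed
  have c0W: "c ! 0 \<in> W" unfolding W_def using notX[of 0] cV0[of 0] g3 by auto
  have cgW: "c ! (g - 1) \<in> W" unfolding W_def using notX[of "g-1"] cV0[of "g-1"] g3 by auto
  have res: "resolving_set V E W"
    unfolding resolving_set_def
  proof (intro conjI ballI impI)
    show "W \<subseteq> V" unfolding W_def by auto
  next
    fix u v assume u: "u \<in> V" and v: "v \<in> V" and uv: "u \<noteq> v"
    show "\<exists>w\<in>W. dist V E u w \<noteq> dist V E v w"
    proof (cases "u \<in> W")
      case True
      have "dist V E v u \<noteq> 0" using dist_zero[OF con v u] uv by auto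
      then show ?thesis using True dist_self[OF u] by (intro bexI[of _ u]) auto
    next
      case uW: False
      show ?thesis
      proof (cases "v \<in> W")
        case True
        have "dist V E u v \<noteq> 0" using dist_zero[OF con u v] uv by auto
        then show ?thesis using True dist_self[OF v] by (intro bexI[of _ v]) auto
      next
        case False
        obtain i where i: "i \<in> {1..g-2}" "u = c ! i" using uW u unfolding W_def X_def by auto
        obtain j where j: "j \<in> {1..g-2}" "v = c ! j" using False v unfolding W_def X_def by auto
        have ij: "i \<noteq> j" using i j uv by auto
        have sy: "\<And>a b. a \<in> V \<Longrightarrow> b \<in> V \<Longrightarrow> dist V E a b = dist V E b a"
        proof -
          fix a b assume a: "a \<in> V" and b: "b \<in> V"
          have sym: "\<forall>x y. E x y \<longrightarrow> E y x" using sg unfolding simple_graph_def by auto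
          have le: "\<And>a b. a \<in> V \<Longrightarrow> b \<in> V \<Longrightarrow> dist V E b a \<le> dist V E a b"
          proof -
            fix a b assume a: "a \<in> V" and b: "b \<in> V"
            obtain p where p: "wk V E p" "hd p = a" "last p = b" "length p = Suc (dist V E a b)"
              using dist_ex[OF con a b] by blast
            have "p \<noteq> []" using p by auto
            then have "dist V E b a + 1 \<le> length (rev p)"
              using dist_le[OF wk_rev[OF sym p(1)]] p by (simp add: hd_rev last_rev)
            then show "dist V E b a \<le> dist V E a b" using p by simp
          qed
          show "dist V E a b = dist V E b a" using le[OF a b] le[OF b a] by simp
        qed
        have cV: "\<And>k. k < g \<Longrightarrow> c ! k \<in> V" using sc g_def by auto
        show ?thesis
        proof (rule ccontr)
          assume "\<not> ?thesis"
          then have e1: "dist V E u (c!0) = dist V E v (c!0)"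
            and e2: "dist V E u (c!(g-1)) = dist V E v (c!(g-1))" using c0W cgW by auto
          have ig: "i < g" "j < g" using i j g3 by auto
          have "min i (g - i) = min j (g - j)"
            using e1 d0[OF ig(1)] d0[OF ig(2)] sy[OF cV[OF ig(1)] cV[of 0]] sy[OF cV[OF ig(2)] cV[of 0]]
              i(2) j(2) g3 by simp
          moreover have "min (Suc i) (g - Suc i) = min (Suc j) (g - Suc j)"
            using e2 d1[of i] d1[of j] i j sy[OF cV[OF ig(1)] cV[of "g-1"]] sy[OF cV[OF ig(2)] cV[of "g-1"]]
              g3 by simp
          ultimately show False using arith_fact[of i g j] i(1) j(1) ij g3 by auto
        qed
      qed
    qed
  qed
  have "metric_dimension V E \<le> card W" unfolding metric_dimension_def
    by (rule Least_le) (use res in blast)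
  then show ?thesis using cardW gV g3 len g_def by linarith
qed

end
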